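(* Let $q$ be a prime power and $\mathcal{L}$ a non-empty set of lines of $\mathrm{PG}(n,q)$ satisfying (Pt), (Pl), (Sd) and (To) (see context). Suppose $\mathcal{L}$ contains a pentagon with vertices $A,B,C,D,E$, and let $U=\langle A,B,C,D,E\rangle$. Then $|\mathcal{L}_U|\ge 5q$ and $\dim(U)=4$.
   Context: (Pt): every point of $\mathrm{PG}(n,q)$ lies on $0$ or $q+1$ lines of $\mathcal{L}$. (Pl): every plane contains $0$, $1$ or $q+1$ lines of $\mathcal{L}$. (Sd): every solid ($3$-dimensional subspace) contains $0$, $1$, $q+1$ or $2q+1$ lines of $\mathcal{L}$. (To): $|\mathcal{L}|\le q^5+q^4+q^3+q^2+q+1$. For a subspace $U$, $\mathcal{L}_U$ is the set of lines of $\mathcal{L}$ contained in $U$. A pentagon of $\mathcal{L}$ with vertices $A,B,C,D,E$ is a set of five pairwise distinct points such that the lines $AB,BC,CD,DE,EA$ all belong to $\mathcal{L}$ and are pairwise distinct. *)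

theory Defs
  imports "HOL-Analysis.Analysis"
begin

text \<open>PG(n,q) is modelled as the lattice of subspaces of the vector space F^(n+1),
  where F is a finite field of order q (type 'a) and n+1 = CARD('n).
  A projective k-subspace is a vector subspace of (vector) dimension k+1.\<close>

definition proj_sub :: "nat \<Rightarrow> ('a::field ^ 'n) set \<Rightarrow> bool" where
  "proj_sub k U \<longleftrightarrow> vec.subspace U \<and> vec.dim U = k + 1"

abbreviation is_point :: "('a::field ^ 'n) set \<Rightarrow> bool" where "is_point \<equiv> proj_sub 0"
abbreviation is_line :: "('a::field ^ 'n) set \<Rightarrow> bool" where "is_line \<equiv> proj_sub 1"
abbreviation is_plane :: "('a::field ^ 'n) set \<Rightarrow> bool" where "is_plane \<equiv> proj_sub 2"
abbreviation is_solid :: "('a::field ^ 'n) set \<Rightarrow> bool" where "is_solid \<equiv> proj_sub 3"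

definition pdim :: "('a::field ^ 'n) set \<Rightarrow> int" where
  "pdim U = int (vec.dim U) - 1"

definition join :: "('a::field ^ 'n) set set \<Rightarrow> ('a ^ 'n) set" where
  "join S = vec.span (\<Union> S)"

definition lines_in :: "('a::field ^ 'n) set set \<Rightarrow> ('a ^ 'n) set \<Rightarrow> ('a ^ 'n) set set" where
  "lines_in L U = {l \<in> L. l \<subseteq> U}"

definition cond_Pt :: "('a::{field,finite} ^ 'n) set set \<Rightarrow> bool" where
  "cond_Pt L \<longleftrightarrow> (\<forall>P. is_point P \<longrightarrow>
     card {l \<in> L. P \<subseteq> l} = 0 \<or> card {l \<in> L. P \<subseteq> l} = CARD('a) + 1)"

definition cond_Pl :: "('a::{field,finite} ^ 'n) set set \<Rightarrow> bool" where
  "cond_Pl L \<longleftrightarrow> (\<forall>\<pi>. is_plane \<pi> \<longrightarrow> card (lines_in L \<pi>) \<in> {0, 1, CARD('a) + 1})"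

definition cond_Sd :: "('a::{field,finite} ^ 'n) set set \<Rightarrow> bool" where
  "cond_Sd L \<longleftrightarrow> (\<forall>S. is_solid S \<longrightarrow>
     card (lines_in L S) \<in> {0, 1, CARD('a) + 1, 2 * CARD('a) + 1})"

definition cond_To :: "('a::{field,finite} ^ 'n) set set \<Rightarrow> bool" where
  "cond_To L \<longleftrightarrow> (let q = CARD('a) in card L \<le> q^5 + q^4 + q^3 + q^2 + q + 1)"

definition is_pentagon :: "('a::field ^ 'n) set set \<Rightarrow> ('a ^ 'n) set \<Rightarrow> ('a ^ 'n) set \<Rightarrow>
    ('a ^ 'n) set \<Rightarrow> ('a ^ 'n) set \<Rightarrow> ('a ^ 'n) set \<Rightarrow> bool" where
  "is_pentagon L A B C D E \<longleftrightarrow>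
     is_point A \<and> is_point B \<and> is_point C \<and> is_point D \<and> is_point E \<and>
     distinct [A, B, C, D, E] \<and>
     join {A, B} \<in> L \<and> join {B, C} \<in> L \<and> join {C, D} \<in> L \<and> join {D, E} \<in> L \<and> join {E, A} \<in> L \<and>
     distinct [join {A, B}, join {B, C}, join {C, D}, join {D, E}, join {E, A}]"

end

theory Submission
  imports Defs
begin

lemma dim_join2:
  fixes S T :: "('a::field ^ 'n) set"
  assumes "vec.subspace S" "vec.subspace T"
  shows "vec.dim (vec.span (S \<union> T)) + vec.dim (S \<inter> T) = vec.dim S + vec.dim T"
proof -
  have "vec.span (S \<union> T) = {x + y |x y. x \<in> S \<and> y \<in> T}"
  proof -
    have h: "vec.span S = S" "vec.span T = T" using assms by auto
    show ?thesis by (simp only: vec.span_Un h)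
  qed
  thus ?thesis using vec.dim_sums_Int[OF assms] by simp
qed

lemma sub_eq:
  fixes V W :: "('a::field ^ 'n) set"
  assumes "vec.subspace V" "vec.subspace W" "V \<subseteq> W" "vec.dim W \<le> vec.dim V"
  shows "V = W"
  using vec.subspace_dim_equal assms by blast

lemma psub_dim:
  fixes V W :: "('a::field ^ 'n) set"
  assumes "vec.subspace V" "vec.subspace W" "V \<subseteq> W" "V \<noteq> W"
  shows "vec.dim V < vec.dim W"
  using sub_eq[OF assms(1-3)] assms(4) by linarith

lemma dim_Un_le:
  fixes S T :: "('a::field ^ 'n) set"
  shows "vec.dim (S \<union> T) \<le> vec.dim S + vec.dim T"
proof -
  have e: "vec.span (S \<union> T) = vec.span (vec.span S \<union> vec.span T)"
    by (simp add: vec.span_Un vec.span_span)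
  have "vec.dim (S \<union> T) = vec.dim (vec.span (vec.span S \<union> vec.span T))"
    by (metis e vec.dim_span)
  also have "\<dots> \<le> vec.dim (vec.span S) + vec.dim (vec.span T)"
    using dim_join2[of "vec.span S" "vec.span T"] by simp
  finally show ?thesis by simp
qed

lemma line_meet_point:
  fixes l m P X :: "('a::field ^ 'n) set"
  assumes "is_line l" "is_line m" "l \<noteq> m" "is_point P" "is_point X"
    "P \<subseteq> l" "P \<subseteq> m" "X \<subseteq> l" "X \<subseteq> m"
  shows "P = X"
proof -
  have sl: "vec.subspace l" "vec.subspace m" "vec.subspace P" "vec.subspace X"
    and dl: "vec.dim l = 2" "vec.dim m = 2" "vec.dim P = 1" "vec.dim X = 1"
    using assms unfolding proj_sub_def by auto
  have sz: "vec.subspace (l \<inter> m)" using sl vec.subspace_inter by blast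
  have "l \<inter> m \<noteq> l"
  proof
    assume "l \<inter> m = l"
    hence "l \<subseteq> m" by blast
    hence "l = m" using sub_eq[OF sl(1,2)] dl by simp
    thus False using assms(3) by simp
  qed
  hence "vec.dim (l \<inter> m) < 2" using psub_dim[OF sz sl(1)] dl by auto
  hence "P = l \<inter> m" "X = l \<inter> m"
    using sub_eq[OF sl(3) sz] sub_eq[OF sl(4) sz] assms dl by auto
  thus ?thesis by simp
qed

lemma plane_of_lines:
  fixes l m P :: "('a::field ^ 'n) set"
  assumes "is_line l" "is_line m" "l \<noteq> m" "is_point P" "P \<subseteq> l" "P \<subseteq> m"
  shows "is_plane (vec.span (l \<union> m))"
proof -
  have sl: "vec.subspace l" "vec.subspace m" "vec.subspace P"
    and dl: "vec.dim l = 2" "vec.dim m = 2" "vec.dim P = 1"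
    using assms unfolding proj_sub_def by auto
  have sz: "vec.subspace (l \<inter> m)" using sl vec.subspace_inter by blast
  have "l \<inter> m \<noteq> l"
  proof
    assume "l \<inter> m = l"
    hence "l \<subseteq> m" by blast
    hence "l = m" using sub_eq[OF sl(1,2)] dl by simp
    thus False using assms(3) by simp
  qed
  hence "vec.dim (l \<inter> m) < 2" using psub_dim[OF sz sl(1)] dl by auto
  moreover have "vec.dim P \<le> vec.dim (l \<inter> m)" using assms(5,6) vec.dim_subset by (metis le_inf_iff)
  ultimately have "vec.dim (l \<inter> m) = 1" using dl by simp
  thus ?thesis using dim_join2[OF sl(1,2)] dl unfolding proj_sub_def by simp
qed

lemma plane_meet_line:
  fixes \<sigma> \<pi> l j :: "('a::field ^ 'n) set"
  assumes "is_plane \<sigma>" "is_plane \<pi>" "\<sigma> \<noteq> \<pi>" "is_line l" "is_line j"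
    "l \<subseteq> \<sigma>" "l \<subseteq> \<pi>" "j \<subseteq> \<sigma>" "j \<subseteq> \<pi>"
  shows "j = l"
proof -
  have sl: "vec.subspace \<sigma>" "vec.subspace \<pi>" "vec.subspace l" "vec.subspace j"
    and dl: "vec.dim \<sigma> = 3" "vec.dim \<pi> = 3" "vec.dim l = 2" "vec.dim j = 2"
    using assms unfolding proj_sub_def by auto
  have sz: "vec.subspace (\<sigma> \<inter> \<pi>)" using sl vec.subspace_inter by blast
  have "\<sigma> \<inter> \<pi> \<noteq> \<sigma>"
  proof
    assume "\<sigma> \<inter> \<pi> = \<sigma>"
    hence "\<sigma> \<subseteq> \<pi>" by blast
    hence "\<sigma> = \<pi>" using sub_eq[OF sl(1,2)] dl by simp
    thus False using assms(3) by simp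
  qed
  hence "vec.dim (\<sigma> \<inter> \<pi>) < 3" using psub_dim[OF sz sl(1)] dl by auto
  hence "l = \<sigma> \<inter> \<pi>" using sub_eq[OF sl(3) sz] assms dl by auto
  thus ?thesis using sub_eq[OF sl(4,3)] assms dl by auto
qed

lemma q_ge2: "CARD('a::{field,finite}) \<ge> 2"
proof -
  have "card {0::'a, 1} = 2" by simp
  moreover have "card {0::'a, 1} \<le> CARD('a)" by (rule card_mono) auto
  ultimately show ?thesis by simp
qed

lemma two_lines_plane_card:
  fixes L :: "('a::{field,finite} ^ 'n) set set"
  assumes Pl: "cond_Pl L" and "is_plane \<pi>" "l \<in> L" "m \<in> L" "l \<noteq> m" "l \<subseteq> \<pi>" "m \<subseteq> \<pi>"
  shows "card (lines_in L \<pi>) = CARD('a) + 1"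
proof -
  have "{l, m} \<subseteq> lines_in L \<pi>" using assms unfolding lines_in_def by auto
  hence "card {l, m} \<le> card (lines_in L \<pi>)" by (rule card_mono[rotated]) simp
  hence "2 \<le> card (lines_in L \<pi>)" using assms(5) by simp
  thus ?thesis using Pl assms(2) unfolding cond_Pl_def by fastforce
qed

lemma pencil:
  fixes L :: "('a::{field,finite} ^ 'n) set set"
  assumes lines: "\<forall>l \<in> L. is_line l"
    and Pt: "cond_Pt L" and Pl: "cond_Pl L" and Sd: "cond_Sd L"
    and pi: "is_plane \<pi>" and lL: "l \<in> L" and mL: "m \<in> L" and lm: "l \<noteq> m"
    and lpi: "l \<subseteq> \<pi>" and mpi: "m \<subseteq> \<pi>" and P: "is_point P" and Pl': "P \<subseteq> l" and Pm: "P \<subseteq> m"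
    and nL: "n \<in> L" and npi: "n \<subseteq> \<pi>"
  shows "P \<subseteq> n"
proof (rule ccontr)
  assume Pn: "\<not> P \<subseteq> n"
  let ?q = "CARD('a::{field,finite})"
  have q2: "?q \<ge> 2" by (rule q_ge2)
  have ll: "is_line l" "is_line m" "is_line n" using lines lL mL nL by auto
  have sl: "vec.subspace l" "vec.subspace m" "vec.subspace n" "vec.subspace \<pi>"
    and dl: "vec.dim l = 2" "vec.dim m = 2" "vec.dim n = 2" "vec.dim \<pi> = 3"
    using ll pi unfolding proj_sub_def by auto
  have nl: "n \<noteq> l" using Pn Pl' by auto
  define X where "X = l \<inter> n"
  have sX: "vec.subspace X" unfolding X_def using sl vec.subspace_inter by blast
  have "X \<noteq> l"
  proof
    assume "X = l"
    hence "l \<subseteq> n" unfolding X_def by blast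
    hence "l = n" using sub_eq[OF sl(1,3)] dl by simp
    thus False using nl by simp
  qed
  hence dX1: "vec.dim X < 2" using psub_dim[OF sX sl(1)] dl unfolding X_def by auto
  have "vec.span (l \<union> n) \<subseteq> \<pi>" using lpi npi sl(4) vec.span_minimal by blast
  hence "vec.dim (vec.span (l \<union> n)) \<le> 3" using vec.dim_subset dl by metis
  hence "vec.dim X = 1" using dim_join2[OF sl(1,3)] dl dX1 unfolding X_def by simp
  hence X: "is_point X" using sX unfolding proj_sub_def by simp
  have Xl: "X \<subseteq> l" and Xn: "X \<subseteq> n" unfolding X_def by auto
  have cpi: "card (lines_in L \<pi>) = ?q + 1"
    using two_lines_plane_card[OF Pl pi lL mL lm lpi mpi] .
  show False
  proof (cases "\<forall>k\<in>L. X \<subseteq> k \<longrightarrow> k \<subseteq> \<pi>")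
    case True
    have sub: "{k \<in> L. X \<subseteq> k} \<subseteq> lines_in L \<pi>" using True unfolding lines_in_def by auto
    have "l \<in> {k \<in> L. X \<subseteq> k}" using lL Xl by simp
    hence "card {k \<in> L. X \<subseteq> k} \<noteq> 0" by (auto simp add: card_eq_0_iff)
    moreover have "card {k \<in> L. X \<subseteq> k} = 0 \<or> card {k \<in> L. X \<subseteq> k} = ?q + 1"
      by (rule Pt[unfolded cond_Pt_def, rule_format, OF X])
    ultimately have "card {k \<in> L. X \<subseteq> k} = ?q + 1" by linarith
    hence "{k \<in> L. X \<subseteq> k} = lines_in L \<pi>" using card_subset_eq[OF _ sub] cpi by simp
    moreover have "m \<in> lines_in L \<pi>" using mL mpi unfolding lines_in_def by simp
    ultimately have "X \<subseteq> m" by blast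
    hence "P = X" using line_meet_point[OF ll(1,2) lm P X Pl' Pm Xl] by simp
    thus False using Pn Xn by simp
  next
    case False
    then obtain k where kL: "k \<in> L" and Xk: "X \<subseteq> k" and kpi: "\<not> k \<subseteq> \<pi>" by blast
    have lk: "is_line k" using lines kL by auto
    have sk: "vec.subspace k" and dk: "vec.dim k = 2" using lk unfolding proj_sub_def by auto
    have kl: "k \<noteq> l" using kpi lpi by auto
    have kn: "k \<noteq> n" using kpi npi by auto
    define \<sigma>1 where "\<sigma>1 = vec.span (k \<union> l)"
    define \<sigma>2 where "\<sigma>2 = vec.span (k \<union> n)"
    define S where "S = vec.span (\<pi> \<union> k)"
    have p1: "is_plane \<sigma>1" unfolding \<sigma>1_def using plane_of_lines[OF lk ll(1) kl X Xk Xl] .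
    have p2: "is_plane \<sigma>2" unfolding \<sigma>2_def using plane_of_lines[OF lk ll(3) kn X Xk Xn] .
    have pln: "is_plane (vec.span (l \<union> n))" using plane_of_lines[OF ll(1) ll(3) nl[symmetric] X Xl Xn] .
    have sk1: "k \<subseteq> \<sigma>1" "l \<subseteq> \<sigma>1" unfolding \<sigma>1_def using vec.span_superset by blast+
    have sk2: "k \<subseteq> \<sigma>2" "n \<subseteq> \<sigma>2" unfolding \<sigma>2_def using vec.span_superset by blast+
    have piS: "\<pi> \<subseteq> S" "k \<subseteq> S" unfolding S_def using vec.span_superset by blast+
    have sS: "vec.subspace S" unfolding S_def by simp
    have s1S: "\<sigma>1 \<subseteq> S" unfolding \<sigma>1_def by (rule vec.span_minimal) (use piS lpi sS in auto)
    have s2S: "\<sigma>2 \<subseteq> S" unfolding \<sigma>2_def by (rule vec.span_minimal) (use piS npi sS in auto)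
    have si: "vec.subspace (\<pi> \<inter> k)" using sl sk vec.subspace_inter by blast
    have "\<pi> \<inter> k \<noteq> k" using kpi by blast
    hence "vec.dim (\<pi> \<inter> k) < 2" using psub_dim[OF si sk] dk by auto
    moreover have "vec.dim X \<le> vec.dim (\<pi> \<inter> k)" using Xk Xl lpi vec.dim_subset
      by (metis le_inf_iff order_trans)
    ultimately have "vec.dim (\<pi> \<inter> k) = 1" using X unfolding proj_sub_def by simp
    hence "vec.dim S = 4" unfolding S_def using dim_join2[OF sl(4) sk] dl dk by simp
    hence solid: "is_solid S" using sS unfolding proj_sub_def by simp
    have pi1: "\<pi> \<noteq> \<sigma>1" using kpi sk1 by auto
    have pi2: "\<pi> \<noteq> \<sigma>2" using kpi sk2 by auto
    have s12: "\<sigma>1 \<noteq> \<sigma>2"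
    proof
      assume e: "\<sigma>1 = \<sigma>2"
      have sp: "vec.subspace \<sigma>1" "vec.subspace (vec.span (l \<union> n))" unfolding \<sigma>1_def by simp_all
      have "vec.span (l \<union> n) \<subseteq> \<sigma>1" using sk1 sk2 e sp(1) vec.span_minimal by (metis Un_least)
      hence a: "vec.span (l \<union> n) = \<sigma>1" using sub_eq[OF sp(2,1)] pln p1 unfolding proj_sub_def by simp
      have "vec.span (l \<union> n) \<subseteq> \<pi>" using lpi npi sl(4) vec.span_minimal by blast
      hence "vec.span (l \<union> n) = \<pi>" using sub_eq[OF sp(2) sl(4)] pln dl unfolding proj_sub_def by simp
      thus False using a pi1 by simp
    qed
    define U0 where "U0 = lines_in L \<pi>"
    define U1 where "U1 = lines_in L \<sigma>1"
    define U2 where "U2 = lines_in L \<sigma>2"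
    have c0: "card U0 = ?q + 1" unfolding U0_def using cpi .
    have c1: "card U1 = ?q + 1" unfolding U1_def
      using two_lines_plane_card[OF Pl p1 kL lL kl sk1] .
    have c2: "card U2 = ?q + 1" unfolding U2_def
      using two_lines_plane_card[OF Pl p2 kL nL kn sk2] .
    have i01: "U0 \<inter> U1 \<subseteq> {l}"
    proof
      fix j assume "j \<in> U0 \<inter> U1"
      hence "j \<in> L" "j \<subseteq> \<pi>" "j \<subseteq> \<sigma>1" unfolding U0_def U1_def lines_in_def by auto
      thus "j \<in> {l}" using plane_meet_line[OF p1 pi pi1[symmetric] ll(1), of j] lines sk1 lpi by auto
    qed
    have i02: "U0 \<inter> U2 \<subseteq> {n}"
    proof
      fix j assume "j \<in> U0 \<inter> U2"
      hence "j \<in> L" "j \<subseteq> \<pi>" "j \<subseteq> \<sigma>2" unfolding U0_def U2_def lines_in_def by auto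
      thus "j \<in> {n}" using plane_meet_line[OF p2 pi pi2[symmetric] ll(3), of j] lines sk2 npi by auto
    qed
    have i12: "U1 \<inter> U2 \<subseteq> {k}"
    proof
      fix j assume "j \<in> U1 \<inter> U2"
      hence "j \<in> L" "j \<subseteq> \<sigma>1" "j \<subseteq> \<sigma>2" unfolding U1_def U2_def lines_in_def by auto
      thus "j \<in> {k}" using plane_meet_line[OF p1 p2 s12 lk, of j] lines sk1 sk2 by auto
    qed
    have "card (U0 \<inter> U1) \<le> 1" using card_mono[OF _ i01] by simp
    hence a01: "card (U0 \<union> U1) \<ge> 2 * ?q + 1" using card_Un_Int[of U0 U1] c0 c1 by simp
    have "(U0 \<union> U1) \<inter> U2 \<subseteq> {n, k}" using i02 i12 by blast
    hence "card ((U0 \<union> U1) \<inter> U2) \<le> card {n, k}" by (rule card_mono[rotated]) simp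
    moreover have "card {n, k} \<le> 2" by (simp add: card_insert_if)
    ultimately have "card ((U0 \<union> U1) \<inter> U2) \<le> 2" by linarith
    hence a: "card (U0 \<union> U1 \<union> U2) \<ge> 3 * ?q" using card_Un_Int[of "U0 \<union> U1" U2] c2 a01 by simp
    have "U0 \<union> U1 \<union> U2 \<subseteq> lines_in L S"
      unfolding U0_def U1_def U2_def lines_in_def using piS s1S s2S by auto
    hence "card (U0 \<union> U1 \<union> U2) \<le> card (lines_in L S)" by (rule card_mono[rotated]) simp
    moreover have "card (lines_in L S) \<le> 2 * ?q + 1" using Sd solid unfolding cond_Sd_def by fastforce
    ultimately show False using a q2 by simp
  qed
qed


lemma nonadj:
  fixes L :: "('a::{field,finite} ^ 'n) set set"
  assumes lines: "\<forall>l \<in> L. is_line l"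
    and Pt: "cond_Pt L" and Pl: "cond_Pl L" and Sd: "cond_Sd L"
    and pi: "is_plane \<pi>" and lL: "l1 \<in> L" and mL: "l2 \<in> L" and lm: "l1 \<noteq> l2"
    and lpi: "l1 \<subseteq> \<pi>" and mpi: "l2 \<subseteq> \<pi>" and V: "is_point V" and V1: "V \<subseteq> l1" and V2: "V \<subseteq> l2"
    and N: "is_point N" and N1: "N \<subseteq> l1" and NV: "N \<noteq> V"
    and Wpi: "W \<subseteq> \<pi>" and mdef: "m = vec.span (N \<union> W)" and mL': "m \<in> L" and ml: "m \<noteq> l1"
  shows False
proof -
  have "N \<subseteq> \<pi>" using N1 lpi by auto
  moreover have "vec.subspace \<pi>" using pi unfolding proj_sub_def by simp
  ultimately have mpi': "m \<subseteq> \<pi>" unfolding mdef using Wpi vec.span_minimal by (metis Un_least)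
  have "V \<subseteq> m" using pencil[OF lines Pt Pl Sd pi lL mL lm lpi mpi V V1 V2 mL' mpi'] .
  moreover have "N \<subseteq> m" unfolding mdef using vec.span_superset by blast
  ultimately have "V = N" using line_meet_point[OF _ _ ml[symmetric] V N] lines mL' lL V1 N1 by blast
  thus False using NV by simp
qed

lemma pencil_set:
  fixes L :: "('a::{field,finite} ^ 'n) set set"
  assumes lines: "\<forall>l \<in> L. is_line l"
    and Pt: "cond_Pt L" and Pl: "cond_Pl L" and Sd: "cond_Sd L"
    and pi: "is_plane \<pi>" and lL: "l \<in> L" and mL: "m \<in> L" and lm: "l \<noteq> m"
    and lpi: "l \<subseteq> \<pi>" and mpi: "m \<subseteq> \<pi>" and P: "is_point P" and Pl': "P \<subseteq> l" and Pm: "P \<subseteq> m"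
  shows "\<And>n. n \<in> lines_in L \<pi> \<Longrightarrow> P \<subseteq> n \<and> n \<subseteq> \<pi> \<and> is_line n"
proof -
  fix n assume "n \<in> lines_in L \<pi>"
  hence n: "n \<in> L" "n \<subseteq> \<pi>" unfolding lines_in_def by auto
  show "P \<subseteq> n \<and> n \<subseteq> \<pi> \<and> is_line n"
    using pencil[OF lines Pt Pl Sd pi lL mL lm lpi mpi P Pl' Pm n] n lines by blast
qed

lemma adj_line:
  fixes X Y l n :: "('a::field ^ 'n) set"
  assumes "is_point X" "is_point Y" "X \<noteq> Y" "is_line l" "X \<subseteq> l" "Y \<subseteq> l"
    "is_line n" "X \<subseteq> n" "Y \<subseteq> n"
  shows "n = l"
proof (rule ccontr)
  assume "n \<noteq> l"
  hence "X = Y" using line_meet_point[OF assms(7,4) _ assms(1,2,8,5,9,6)] by simp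
  thus False using assms(3) by simp
qed

lemma card_Un_ge:
  assumes "finite X" "finite Y" "card X \<ge> a" "card Y \<ge> b" "X \<inter> Y \<subseteq> Z" "finite Z" "card Z \<le> c"
  shows "card (X \<union> Y) + c \<ge> a + b"
proof -
  have "card (X \<inter> Y) \<le> card Z" using assms by (meson card_mono)
  thus ?thesis using card_Un_Int[OF assms(1,2)] assms by linarith
qed

theorem lemma4:
  fixes L :: "('a::{field,finite} ^ 'n) set set"
    and A B C D E :: "('a ^ 'n) set"
  assumes lines: "\<forall>l \<in> L. is_line l"
    and nonempty: "L \<noteq> {}"
    and Pt: "cond_Pt L" and Pl: "cond_Pl L" and Sd: "cond_Sd L" and To: "cond_To L"
    and pent: "is_pentagon L A B C D E"
  shows "card (lines_in L (join {A, B, C, D, E})) \<ge> 5 * CARD('a)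
         \<and> pdim (join {A, B, C, D, E}) = 4"
proof -
  let ?q = "CARD('a)"
  have q2: "?q \<ge> 2" by (rule q_ge2)
  define AB where "AB = vec.span (A \<union> B)"
  define BC where "BC = vec.span (B \<union> C)"
  define CD where "CD = vec.span (C \<union> D)"
  define DE where "DE = vec.span (D \<union> E)"
  define EA where "EA = vec.span (E \<union> A)"
  define U where "U = vec.span (A \<union> B \<union> C \<union> D \<union> E)"
  have Ueq: "join {A, B, C, D, E} = U" unfolding U_def join_def by (simp add: Un_assoc)
  have pts: "is_point A" "is_point B" "is_point C" "is_point D" "is_point E"
    and dist: "A \<noteq> B" "A \<noteq> C" "A \<noteq> D" "A \<noteq> E" "B \<noteq> C" "B \<noteq> D" "B \<noteq> E"
      "C \<noteq> D" "C \<noteq> E" "D \<noteq> E"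
    and inL: "AB \<in> L" "BC \<in> L" "CD \<in> L" "DE \<in> L" "EA \<in> L"
    and ldist: "AB \<noteq> BC" "AB \<noteq> CD" "AB \<noteq> DE" "AB \<noteq> EA" "BC \<noteq> CD" "BC \<noteq> DE"
      "BC \<noteq> EA" "CD \<noteq> DE" "CD \<noteq> EA" "DE \<noteq> EA"
    using pent unfolding is_pentagon_def AB_def BC_def CD_def DE_def EA_def join_def by auto
  have isl: "is_line AB" "is_line BC" "is_line CD" "is_line DE" "is_line EA" using lines inL by auto
  have inc: "A \<subseteq> AB" "B \<subseteq> AB" "B \<subseteq> BC" "C \<subseteq> BC" "C \<subseteq> CD" "D \<subseteq> CD"
     "D \<subseteq> DE" "E \<subseteq> DE" "E \<subseteq> EA" "A \<subseteq> EA"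
    unfolding AB_def BC_def CD_def DE_def EA_def using vec.span_superset by blast+
  have sU: "vec.subspace U" unfolding U_def by simp
  have lU: "AB \<subseteq> U" "BC \<subseteq> U" "CD \<subseteq> U" "DE \<subseteq> U" "EA \<subseteq> U"
    unfolding AB_def BC_def CD_def DE_def EA_def U_def by (auto intro!: vec.span_mono)
  define pA where "pA = vec.span (EA \<union> AB)"
  define pB where "pB = vec.span (AB \<union> BC)"
  define pC where "pC = vec.span (BC \<union> CD)"
  define pD where "pD = vec.span (CD \<union> DE)"
  define pE where "pE = vec.span (DE \<union> EA)"
  have plA: "is_plane pA" unfolding pA_def using plane_of_lines[OF isl(5,1) ldist(4)[symmetric] pts(1) inc(10) inc(1)] .
  have plB: "is_plane pB" unfolding pB_def using plane_of_lines[OF isl(1,2) ldist(1) pts(2) inc(2) inc(3)] .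
  have plC: "is_plane pC" unfolding pC_def using plane_of_lines[OF isl(2,3) ldist(5) pts(3) inc(4) inc(5)] .
  have plD: "is_plane pD" unfolding pD_def using plane_of_lines[OF isl(3,4) ldist(8) pts(4) inc(6) inc(7)] .
  have plE: "is_plane pE" unfolding pE_def using plane_of_lines[OF isl(4,5) ldist(10) pts(5) inc(8) inc(9)] .
  have pinc: "EA \<subseteq> pA" "AB \<subseteq> pA" "AB \<subseteq> pB" "BC \<subseteq> pB" "BC \<subseteq> pC" "CD \<subseteq> pC"
    "CD \<subseteq> pD" "DE \<subseteq> pD" "DE \<subseteq> pE" "EA \<subseteq> pE"
    unfolding pA_def pB_def pC_def pD_def pE_def using vec.span_superset by blast+
  have pU: "pA \<subseteq> U" "pB \<subseteq> U" "pC \<subseteq> U" "pD \<subseteq> U" "pE \<subseteq> U"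
  proof -
    have spanU: "\<And>X Y. X \<subseteq> U \<Longrightarrow> Y \<subseteq> U \<Longrightarrow> vec.span (X \<union> Y) \<subseteq> U"
      using sU vec.span_minimal by (metis Un_least)
    show "pA \<subseteq> U" "pB \<subseteq> U" "pC \<subseteq> U" "pD \<subseteq> U" "pE \<subseteq> U"
      unfolding pA_def pB_def pC_def pD_def pE_def using spanU[OF lU(5) lU(1)] spanU[OF lU(1,2)] spanU[OF lU(2,3)] spanU[OF lU(3,4)] spanU[OF lU(4,5)]
      by simp_all
  qed
  define SA where "SA = lines_in L pA"
  define SB where "SB = lines_in L pB"
  define SC where "SC = lines_in L pC"
  define SD where "SD = lines_in L pD"
  define SE where "SE = lines_in L pE"
  have cA: "card SA = ?q + 1" unfolding SA_def
    using two_lines_plane_card[OF Pl plA inL(5,1) ldist(4)[symmetric] pinc(1,2)] .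
  have cB: "card SB = ?q + 1" unfolding SB_def
    using two_lines_plane_card[OF Pl plB inL(1,2) ldist(1) pinc(3,4)] .
  have cC: "card SC = ?q + 1" unfolding SC_def
    using two_lines_plane_card[OF Pl plC inL(2,3) ldist(5) pinc(5,6)] .
  have cD: "card SD = ?q + 1" unfolding SD_def
    using two_lines_plane_card[OF Pl plD inL(3,4) ldist(8) pinc(7,8)] .
  have cE: "card SE = ?q + 1" unfolding SE_def
    using two_lines_plane_card[OF Pl plE inL(4,5) ldist(10) pinc(9,10)] .
  have thA: "\<And>n. n \<in> SA \<Longrightarrow> A \<subseteq> n \<and> n \<subseteq> pA \<and> is_line n" unfolding SA_def
    by (rule pencil_set[OF lines Pt Pl Sd plA inL(5,1) ldist(4)[symmetric] pinc(1,2) pts(1) inc(10) inc(1)])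
  have thB: "\<And>n. n \<in> SB \<Longrightarrow> B \<subseteq> n \<and> n \<subseteq> pB \<and> is_line n" unfolding SB_def
    by (rule pencil_set[OF lines Pt Pl Sd plB inL(1,2) ldist(1) pinc(3,4) pts(2) inc(2) inc(3)])
  have thC: "\<And>n. n \<in> SC \<Longrightarrow> C \<subseteq> n \<and> n \<subseteq> pC \<and> is_line n" unfolding SC_def
    by (rule pencil_set[OF lines Pt Pl Sd plC inL(2,3) ldist(5) pinc(5,6) pts(3) inc(4) inc(5)])
  have thD: "\<And>n. n \<in> SD \<Longrightarrow> D \<subseteq> n \<and> n \<subseteq> pD \<and> is_line n" unfolding SD_def
    by (rule pencil_set[OF lines Pt Pl Sd plD inL(3,4) ldist(8) pinc(7,8) pts(4) inc(6) inc(7)])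
  have thE: "\<And>n. n \<in> SE \<Longrightarrow> E \<subseteq> n \<and> n \<subseteq> pE \<and> is_line n" unfolding SE_def
    by (rule pencil_set[OF lines Pt Pl Sd plE inL(4,5) ldist(10) pinc(9,10) pts(5) inc(8) inc(9)])
  note adj = adj_line
  have iAB: "SA \<inter> SB \<subseteq> {AB}"
  proof
    fix n assume "n \<in> SA \<inter> SB"
    hence a: "n \<in> SA" "n \<in> SB" by auto
    show "n \<in> {AB}" using adj[OF pts(1,2) dist(1) isl(1) inc(1,2)] thA[OF a(1)] thB[OF a(2)] by auto
  qed
  have iBC: "SB \<inter> SC \<subseteq> {BC}"
  proof
    fix n assume "n \<in> SB \<inter> SC"
    hence a: "n \<in> SB" "n \<in> SC" by auto
    show "n \<in> {BC}" using adj[OF pts(2,3) dist(5) isl(2) inc(3,4)] thB[OF a(1)] thC[OF a(2)] by auto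
  qed
  have iCD: "SC \<inter> SD \<subseteq> {CD}"
  proof
    fix n assume "n \<in> SC \<inter> SD"
    hence a: "n \<in> SC" "n \<in> SD" by auto
    show "n \<in> {CD}" using adj[OF pts(3,4) dist(8) isl(3) inc(5,6)] thC[OF a(1)] thD[OF a(2)] by auto
  qed
  have iDE: "SD \<inter> SE \<subseteq> {DE}"
  proof
    fix n assume "n \<in> SD \<inter> SE"
    hence a: "n \<in> SD" "n \<in> SE" by auto
    show "n \<in> {DE}" using adj[OF pts(4,5) dist(10) isl(4) inc(7,8)] thD[OF a(1)] thE[OF a(2)] by auto
  qed
  have iEA: "SA \<inter> SE \<subseteq> {EA}"
  proof
    fix n assume "n \<in> SA \<inter> SE"
    hence a: "n \<in> SA" "n \<in> SE" by auto
    show "n \<in> {EA}" using adj[OF pts(5,1) dist(4)[symmetric] isl(5) inc(9,10)] thA[OF a(1)] thE[OF a(2)] by auto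
  qed
  have iAC: "SA \<inter> SC = {}"
  proof (rule ccontr)
    assume "SA \<inter> SC \<noteq> {}"
    then obtain n where n1: "n \<in> SA" and n2: "n \<in> SC" by blast
    have w: "C \<subseteq> pA" using thA[OF n1] thC[OF n2] by blast
    show False using nonadj[OF lines Pt Pl Sd plA inL(1,5) ldist(4) pinc(2,1) pts(1) inc(1) inc(10)
        pts(2) inc(2) dist(1)[symmetric] w BC_def inL(2) ldist(1)[symmetric]] by blast
  qed
  have iAD: "SA \<inter> SD = {}"
  proof (rule ccontr)
    assume "SA \<inter> SD \<noteq> {}"
    then obtain n where n1: "n \<in> SA" and n2: "n \<in> SD" by blast
    have w: "D \<subseteq> pA" using thA[OF n1] thD[OF n2] by blast
    have e: "DE = vec.span (E \<union> D)" unfolding DE_def by (simp add: Un_commute)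
    show False using nonadj[OF lines Pt Pl Sd plA inL(5,1) ldist(4)[symmetric] pinc(1,2) pts(1) inc(10) inc(1)
        pts(5) inc(9) dist(4)[symmetric] w e inL(4) ldist(10)] by blast
  qed
  have iBD: "SB \<inter> SD = {}"
  proof (rule ccontr)
    assume "SB \<inter> SD \<noteq> {}"
    then obtain n where n1: "n \<in> SB" and n2: "n \<in> SD" by blast
    have w: "D \<subseteq> pB" using thB[OF n1] thD[OF n2] by blast
    show False using nonadj[OF lines Pt Pl Sd plB inL(2,1) ldist(1)[symmetric] pinc(4,3) pts(2) inc(3) inc(2)
        pts(3) inc(4) dist(5)[symmetric] w CD_def inL(3) ldist(5)[symmetric]] by blast
  qed
  have iBE: "SB \<inter> SE = {}"
  proof (rule ccontr)
    assume "SB \<inter> SE \<noteq> {}"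
    then obtain n where n1: "n \<in> SB" and n2: "n \<in> SE" by blast
    have w: "E \<subseteq> pB" using thB[OF n1] thE[OF n2] by blast
    have e: "EA = vec.span (A \<union> E)" unfolding EA_def by (simp add: Un_commute)
    show False using nonadj[OF lines Pt Pl Sd plB inL(1,2) ldist(1) pinc(3,4) pts(2) inc(2) inc(3)
        pts(1) inc(1) dist(1) w e inL(5) ldist(4)[symmetric]] by blast
  qed
  have iCE: "SC \<inter> SE = {}"
  proof (rule ccontr)
    assume "SC \<inter> SE \<noteq> {}"
    then obtain n where n1: "n \<in> SC" and n2: "n \<in> SE" by blast
    have w: "E \<subseteq> pC" using thC[OF n1] thE[OF n2] by blast
    show False using nonadj[OF lines Pt Pl Sd plC inL(3,2) ldist(5)[symmetric] pinc(6,5) pts(3) inc(5) inc(4)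
        pts(4) inc(6) dist(8)[symmetric] w DE_def inL(4) ldist(8)[symmetric]] by blast
  qed
  have f: "finite X" for X :: "('a ^ 'n) set set" by simp
  have s1: "card (SA \<union> SB) + 1 \<ge> (?q + 1) + (?q + 1)"
    by (rule card_Un_ge[OF f f _ _ iAB f]) (simp_all add: cA cB)
  have i3: "(SA \<union> SB) \<inter> SC \<subseteq> {BC}" using iAC iBC by blast
  have s2: "card (SA \<union> SB \<union> SC) + 1 \<ge> (2 * ?q + 1) + (?q + 1)"
    by (rule card_Un_ge[OF f f _ _ i3 f]) (use s1 cC in simp_all)
  have i4: "(SA \<union> SB \<union> SC) \<inter> SD \<subseteq> {CD}" using iAD iBD iCD by blast
  have s3: "card (SA \<union> SB \<union> SC \<union> SD) + 1 \<ge> (3 * ?q + 1) + (?q + 1)"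
    by (rule card_Un_ge[OF f f _ _ i4 f]) (use s2 cD in simp_all)
  have i5: "(SA \<union> SB \<union> SC \<union> SD) \<inter> SE \<subseteq> {DE, EA}" using iEA iBE iCE iDE by blast
  have c2: "card {DE, EA} \<le> 2" by (simp add: card_insert_if)
  have s4: "card (SA \<union> SB \<union> SC \<union> SD \<union> SE) + 2 \<ge> (4 * ?q + 1) + (?q + 1)"
    by (rule card_Un_ge[OF f f _ _ i5 f c2]) (use s3 cE in simp_all)
  have "SA \<union> SB \<union> SC \<union> SD \<union> SE \<subseteq> lines_in L U"
    unfolding SA_def SB_def SC_def SD_def SE_def lines_in_def using pU by auto
  hence "card (SA \<union> SB \<union> SC \<union> SD \<union> SE) \<le> card (lines_in L U)" by (rule card_mono[rotated]) simp
  hence card5: "card (lines_in L U) \<ge> 5 * ?q" using s4 by linarith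
  have "vec.dim U = vec.dim (A \<union> B \<union> C \<union> D \<union> E)" unfolding U_def by simp
  also have "\<dots> \<le> vec.dim A + vec.dim B + vec.dim C + vec.dim D + vec.dim E"
    using dim_Un_le[of "A \<union> B \<union> C \<union> D" E] dim_Un_le[of "A \<union> B \<union> C" D] dim_Un_le[of "A \<union> B" C]
      dim_Un_le[of A B] by linarith
  finally have d5: "vec.dim U \<le> 5" using pts unfolding proj_sub_def by simp
  have d3: "vec.dim U \<ge> 3" using vec.dim_subset[OF pU(2)] plB unfolding proj_sub_def by simp
  have "vec.dim U \<noteq> 3"
  proof
    assume "vec.dim U = 3"
    hence "is_plane U" using sU unfolding proj_sub_def by simp
    hence "card (lines_in L U) \<le> ?q + 1" using Pl unfolding cond_Pl_def by fastforce
    thus False using card5 q2 by linarith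
  qed
  moreover have "vec.dim U \<noteq> 4"
  proof
    assume "vec.dim U = 4"
    hence "is_solid U" using sU unfolding proj_sub_def by simp
    hence "card (lines_in L U) \<le> 2 * ?q + 1" using Sd unfolding cond_Sd_def by fastforce
    thus False using card5 q2 by linarith
  qed
  ultimately have "vec.dim U = 5" using d3 d5 by linarith
  thus ?thesis using card5 Ueq unfolding pdim_def by simp
qed

end
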